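(* Let $n\in\mathbb N_0$ and $j\in\{-n,\dots,n\}$. If $n+j$ is odd, then $\widetilde P_n^j(0)=0$. Otherwise, \[ \frac{2n+1}{2\pi^2\sqrt{(n+1)^2-j^2}} \le \left|\widetilde P_n^j(0)\right|^2 \le \frac{2n+1}{4\pi\sqrt{(n+1)^2-j^2}}. \] Furthermore, for every $j\in\mathbb N_0$, $\lim_{n\to\infty,\ n+j\text{ even}} \left|\widetilde P_n^j(0)\right| = \frac1\pi$.
   Context: Associated Legendre functions: $P_n^k(t)=\frac{(-1)^k}{2^n n!}(1-t^2)^{k/2}\frac{d^{n+k}}{dt^{n+k}}(t^2-1)^n$ for $n\in\mathbb N_0$, $k=0,\dots,n$, $t\in[-1,1]$. Normalized versions: $\widetilde P_n^k=\sqrt{\frac{2n+1}{4\pi}\frac{(n-k)!}{(n+k)!}}\,P_n^k$ for $k=0,\dots,n$, and $\widetilde P_n^{-k}=(-1)^k\widetilde P_n^k$. *)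

theory Defs
  imports "HOL-Analysis.Analysis"
begin

definition assoc_legendre :: "nat \<Rightarrow> nat \<Rightarrow> real \<Rightarrow> real" where
  "assoc_legendre n k t =
     (-1)^k / (2^n * fact n) * sqrt (1 - t^2) ^ k
       * (deriv ^^ (n + k)) (\<lambda>x. (x^2 - 1)^n) t"

definition norm_assoc_legendre :: "nat \<Rightarrow> int \<Rightarrow> real \<Rightarrow> real" where
  "norm_assoc_legendre n j t =
     (let k = nat \<bar>j\<bar>;
          Pk = sqrt ((2 * real n + 1) / (4 * pi) * (fact (n - k) / fact (n + k)))
               * assoc_legendre n k t
      in if j \<ge> 0 then Pk else (-1)^k * Pk)"

end

theory Submission
  imports Defs "HOL-Computational_Algebra.Polynomial" "HOL-Analysis.Gamma_Function" "HOL-Real_Asymp.Real_Asymp"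
begin


lemma higher_deriv_poly: "(deriv ^^ m) (poly p) = poly ((pderiv ^^ m) p)"
proof (induction m arbitrary: p)
  case 0 then show ?case by simp
next
  case (Suc m)
  have d: "deriv (poly p) = poly (pderiv p)"
    by (rule ext, rule DERIV_imp_deriv, rule poly_DERIV)
  show ?case by (simp only: funpow_Suc_right comp_def d Suc)
qed

definition lp :: "nat \<Rightarrow> real poly" where
  "lp n = (\<Sum>i\<le>n. monom (of_nat (n choose i) * (-1)^(n-i)) (2*i))"

lemma poly_lp: "poly (lp n) x = (x^2 - 1)^n"
proof -
  have "(x^2 - 1)^n = (x^2 + (-1))^n" by simp
  also have "\<dots> = (\<Sum>i\<le>n. of_nat (n choose i) * (x^2)^i * (-1)^(n-i))"
    by (rule binomial_ring)
  also have "\<dots> = poly (lp n) x"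
    by (simp add: lp_def poly_sum poly_monom power_mult[symmetric] mult_ac)
  finally show ?thesis by simp
qed

lemma coeff_lp: "coeff (lp n) m = (if even m \<and> m div 2 \<le> n then of_nat (n choose (m div 2)) * (-1)^(n - m div 2) else 0)"
proof -
  have "coeff (lp n) m = (\<Sum>i\<le>n. if 2*i = m then of_nat (n choose i) * (-1)^(n-i) else 0)"
    by (simp add: lp_def coeff_sum coeff_monom)
  also have "\<dots> = (if even m \<and> m div 2 \<le> n then of_nat (n choose (m div 2)) * (-1)^(n - m div 2) else 0)"
  proof (cases "even m")
    case True
    have "(\<Sum>i\<le>n. if 2*i = m then of_nat (n choose i) * (-1)^(n-i) else (0::real))
       = (\<Sum>i\<le>n. if i = m div 2 then of_nat (n choose i) * (-1)^(n-i) else 0)"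
      by (rule sum.cong) (use True in auto)
    then show ?thesis using True by (simp add: sum.delta)
  next
    case False
    then have "\<And>i. 2*i \<noteq> m" by auto
    then show ?thesis using False by simp
  qed
  finally show ?thesis .
qed

lemma deriv_lp: "(deriv ^^ m) (\<lambda>x. (x^2 - 1)^n) 0 = fact m * (if even m \<and> m div 2 \<le> n then of_nat (n choose (m div 2)) * (-1)^(n - m div 2) else (0::real))"
proof -
  have "(\<lambda>x::real. (x^2 - 1)^n) = poly (lp n)" by (rule ext) (simp add: poly_lp)
  then show ?thesis
    by (simp add: higher_deriv_poly poly_0_coeff_0 coeff_higher_pderiv coeff_lp pochhammer_fact[symmetric])
qed



definition cc :: "nat \<Rightarrow> real" where "cc a = fact (2*a) / (fact a ^ 2 * 4^a)"
definition ww :: "nat \<Rightarrow> real" where "ww a = (\<Prod>k=1..a. (4*real k^2) / (4*real k^2 - 1))"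

lemma ww_Suc: "ww (Suc a) = ww a * ((4*real (Suc a)^2) / (4*real (Suc a)^2 - 1))"
  by (simp add: ww_def)

lemma cc_Suc: "cc (Suc a) = cc a * ((2*a+1)/(2*a+2))"
proof -
  have e: "2*Suc a = Suc (Suc (2*a))" by simp
  have f: "fact (2*Suc a) = fact (2*a) * ((2*real a+1)*(2*real a+2))"
    unfolding e fact_Suc by (simp add: algebra_simps)
  have g: "fact (Suc a) ^ 2 * 4 ^ Suc a = (fact a ^ 2 * 4^a) * ((2*real a+2)*(2*real a+2))"
    unfolding fact_Suc by (simp add: power2_eq_square algebra_simps)
  have p: "fact a ^ 2 * 4^a > (0::real)" by simp
  show ?thesis unfolding cc_def f g using p by (simp add: divide_simps)
qed

lemma cc_ww: "cc a ^ 2 * (2*a+1) * ww a = 1"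
proof (induction a)
  case 0 then show ?case by (simp add: cc_def ww_def)
next
  case (Suc a)
  define X where "X = cc a"
  define W where "W = ww a"
  define t where "t = 2 * real a + 1"
  have h: "4*real (Suc a)^2 = (t+1)^2" "4*real (Suc a)^2 - 1 = t*(t+2)"
    by (simp_all add: t_def algebra_simps power2_eq_square)
  have tp: "t > 0" by (simp add: t_def)
  have e1: "cc (Suc a) = X*(t/(t+1))" by (simp add: cc_Suc X_def t_def add_ac)
  have e2: "ww (Suc a) = W*((t+1)^2/(t*(t+2)))" proof -
    have h2: "(t+1)^2 - 1 = t*(t+2)" by (simp add: algebra_simps power2_eq_square)
    show ?thesis by (simp only: ww_Suc h(1) h2 W_def)
  qed
  have e3: "real (2*Suc a+1) = t+2" by (simp add: t_def)
  have "cc (Suc a) ^ 2 * (2*(Suc a)+1) * ww (Suc a) = (X * (t/(t+1)))^2 * (t+2) * (W * ((t+1)^2 / (t*(t+2))))"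
    by (simp only: e1 e2 e3)
  also have "\<dots> = X^2 * t * W"
  proof -
    define q where "q = t/(t+1)"
    define r where "r = (t+1)^2/(t*(t+2))"
    have "t+1 \<noteq> 0" "t+2 \<noteq> 0" "t \<noteq> 0" using tp by auto
    then have hq: "q*(t+1) = t" and hr: "r*(t*(t+2)) = (t+1)^2" by (simp_all add: q_def r_def)
    have "(q^2*r*(t+2)*t) * (t+1)^2 = (q*(t+1))^2 * (r*(t*(t+2)))" by (simp add: power_mult_distrib mult_ac)
    also have "\<dots> = (t*t) * (t+1)^2" unfolding hq hr by (simp add: power2_eq_square)
    finally have "q^2*r*(t+2)*t = t*t" using \<open>t+1 \<noteq> 0\<close> by simp
    then have "q^2*r*(t+2) = t" using \<open>t \<noteq> 0\<close> by simp
    then show ?thesis unfolding q_def[symmetric] r_def[symmetric]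
      by (simp add: power_mult_distrib mult_ac)
  qed
  also have "\<dots> = 1" using Suc by (simp add: X_def W_def t_def add.commute)
  finally show ?case .
qed

lemma fac_ge1: "k \<ge> 1 \<Longrightarrow> (4*real k^2) / (4*real k^2 - 1) \<ge> 1"
proof -
  assume "k \<ge> 1"
  then have "real k \<ge> 1" by simp
  then have "real k^2 \<ge> 1" by (simp add: one_le_power)
  then have "4*real k^2 \<ge> 4" by simp
  then show ?thesis by (simp add: field_simps)
qed

lemma ww_ge1: "ww a \<ge> 1"
  unfolding ww_def by (rule prod_ge_1) (auto intro: fac_ge1)

lemma ww_le: "ww a \<le> pi/2"
proof -
  have "incseq ww"
  proof (rule incseq_SucI)
    fix a
    have "ww a * 1 \<le> ww (Suc a)" unfolding ww_Suc
      by (rule mult_left_mono) (use ww_ge1[of a] fac_ge1[of "Suc a"] in auto)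
    then show "ww a \<le> ww (Suc a)" by simp
  qed
  moreover have "ww \<longlonglongrightarrow> pi/2" unfolding ww_def[abs_def] by (rule wallis)
  ultimately show ?thesis by (rule incseq_le)
qed

lemma ww_lim: "ww \<longlonglongrightarrow> pi/2" unfolding ww_def[abs_def] by (rule wallis)

lemma cc_eq: "cc a = 1 / sqrt ((2*a+1) * ww a)"
proof -
  have pos: "cc a > 0" by (simp add: cc_def)
  have "cc a = sqrt (cc a ^ 2)" using pos by simp
  also have "cc a ^ 2 = 1 / ((2*a+1) * ww a)"
  proof -
    have "cc a^2 * ((2*a+1)*ww a) = 1" using cc_ww[of a] by (simp add: mult_ac)
    moreover have "(2*a+1)*ww a > 0" using ww_ge1[of a] by simp
    ultimately show ?thesis using ww_ge1[of a] by (auto simp add: eq_divide_eq)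
  qed
  finally show ?thesis by (simp add: real_sqrt_divide)
qed



lemma assoc0: "assoc_legendre n k 0 = (-1)^k / (2^n * fact n) * (fact (n+k) * (if even (n+k) \<and> (n+k) div 2 \<le> n then of_nat (n choose ((n+k) div 2)) * (-1)^(n - (n+k) div 2) else 0))"
  unfolding assoc_legendre_def deriv_lp by simp

lemma N_sq: assumes "k = nat \<bar>j\<bar>"
  shows "(norm_assoc_legendre n j 0)^2 = (2 * real n + 1) / (4 * pi) * (fact (n - k) / fact (n + k)) * (assoc_legendre n k 0)^2"
proof -
  define S where "S = sqrt ((2 * real n + 1) / (4 * pi) * (fact (n - k) / fact (n + k)))"
  have S2: "S^2 = (2 * real n + 1) / (4 * pi) * (fact (n - k) / fact (n + k))"
    unfolding S_def by (rule real_sqrt_pow2) (simp add: pi_gt_zero less_imp_le)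
  have "norm_assoc_legendre n j 0 = (if j \<ge> 0 then S * assoc_legendre n k 0 else (-1)^k * (S * assoc_legendre n k 0))"
    unfolding norm_assoc_legendre_def Let_def S_def assms by simp
  then have "(norm_assoc_legendre n j 0)^2 = S^2 * (assoc_legendre n k 0)^2"
    by (simp add: power_mult_distrib power_even_eq flip: power_mult)
  then show ?thesis by (simp add: S2)
qed

lemma N_odd: assumes "k = nat \<bar>j\<bar>" "odd (n+k)" shows "norm_assoc_legendre n j 0 = 0"
proof -
  have "assoc_legendre n k 0 = 0" using assms(2) by (simp add: assoc0)
  then have "(norm_assoc_legendre n j 0)^2 = 0" using N_sq[OF assms(1), of n] by simp
  then show ?thesis by simp
qed

lemma N_even_cc: assumes "k = nat \<bar>j\<bar>" "k \<le> n" "even (n+k)"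
  shows "(norm_assoc_legendre n j 0)^2 = (2 * real n + 1) / (4 * pi) * cc ((n+k) div 2) * cc ((n-k) div 2)"
proof -
  define a where "a = (n+k) div 2"
  define b where "b = (n-k) div 2"
  have ha: "n + k = 2*a" using assms(2,3) unfolding a_def by presburger
  have hb: "n - k = 2*b" using assms(2,3) unfolding b_def by presburger
  have hn: "n = a + b" using assms(2,3) unfolding a_def b_def by presburger
  have hab: "a \<le> n" "n - a = b" using assms(2,3) unfolding a_def b_def by presburger+
  have A: "assoc_legendre n k 0 = (-1)^k / (2^n * fact n) * (fact (n+k) * (of_nat (n choose a) * (-1)^b))"
    using assms(3) hab by (simp add: assoc0 a_def[symmetric])
  have four: "((2::real)^n)^2 = 4^n" by (simp add: power2_eq_square flip: power_mult_distrib)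
  have four2: "(2::real)^(n*2) = 4^n" by (simp only: power_mult four)
  have A2: "(assoc_legendre n k 0)^2 = fact (n+k)^2 * (of_nat (n choose a))^2 / (4^n * fact n ^ 2)"
    unfolding A by (simp add: power_mult_distrib power_divide power_even_eq flip: power_mult)
      (simp add: power_mult_distrib four2)
  have C: "(of_nat (n choose a) :: real) = fact n / (fact a * fact b)"
    using binomial_fact[OF hab(1)] hab(2) by simp
  have "(norm_assoc_legendre n j 0)^2 = (2 * real n + 1) / (4 * pi) *
          ((fact (n-k) / fact (n+k)) * (fact (n+k)^2 * (fact n / (fact a * fact b))^2 / (4^n * fact n ^ 2)))"
    unfolding N_sq[OF assms(1)] A2 C by (simp only: mult.assoc)
  also have "(fact (n-k) / fact (n+k)) * (fact (n+k)^2 * (fact n / (fact a * fact b))^2 / (4^n * fact n ^ 2))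
       = cc a * cc b"
  proof -
    have p: "(4::real)^n = 4^a * 4^b" using hn by (simp add: power_add)
    show ?thesis unfolding p ha hb cc_def by (simp add: field_simps power2_eq_square)
  qed
  finally show ?thesis by (simp add: a_def b_def mult.assoc)
qed



lemma N_even: assumes "k = nat \<bar>j\<bar>" "k \<le> n" "even (n+k)"
  shows "(norm_assoc_legendre n j 0)^2 = (2*real n+1) / (4*pi * sqrt((real n+1)^2 - (real_of_int j)^2) * sqrt(ww ((n+k) div 2) * ww ((n-k) div 2)))"
proof -
  define a where "a = (n+k) div 2"
  define b where "b = (n-k) div 2"
  have "2*a = n+k" using assms(2,3) unfolding a_def by presburger
  then have ra: "2*real a = real n + real k" by (metis of_nat_add of_nat_mult of_nat_numeral)
  have "2*b = n-k" using assms(2,3) unfolding b_def by presburger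
  then have rb: "2*real b = real n - real k" using assms(2) by (metis of_nat_diff of_nat_mult of_nat_numeral)
  have rk: "real k = real_of_int \<bar>j\<bar>" using assms(1) by simp
  have jj: "(real_of_int j)^2 = (real k)^2" unfolding rk by simp
  have Q: "(real n+1)^2 - (real_of_int j)^2 = (2*real a+1)*(2*real b+1)"
    unfolding jj ra rb by (simp add: algebra_simps power2_eq_square)
  have wa: "ww a > 0" "ww b > 0" using ww_ge1[of a] ww_ge1[of b] by auto
  have "(norm_assoc_legendre n j 0)^2 = (2 * real n + 1) / (4 * pi) * cc a * cc b"
    using N_even_cc[OF assms] by (simp add: a_def b_def)
  also have "\<dots> = (2 * real n + 1) / (4 * pi) * (1 / (sqrt ((2*real a+1)*(2*real b+1)) * sqrt (ww a * ww b)))"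
  proof -
    have "sqrt((2*real a+1)*ww a) * sqrt((2*real b+1)*ww b) = sqrt ((2*real a+1)*(2*real b+1)) * sqrt (ww a * ww b)"
      by (simp only: real_sqrt_mult[symmetric]) (simp add: mult_ac)
    then show ?thesis unfolding cc_eq by (simp add: mult.assoc)
  qed
  also have "\<dots> = (2*real n+1) / (4*pi * sqrt((real n+1)^2 - (real_of_int j)^2) * sqrt(ww a * ww b))"
    unfolding Q by simp
  finally show ?thesis by (simp add: a_def b_def)
qed

lemma parity: "even (int n + j) \<longleftrightarrow> even (n + nat \<bar>j\<bar>)"
proof -
  have "int (n + nat \<bar>j\<bar>) = int n + \<bar>j\<bar>" by simp
  then have "even (n + nat \<bar>j\<bar>) \<longleftrightarrow> even (int n + \<bar>j\<bar>)" by (metis even_of_nat_iff)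
  also have "\<dots> \<longleftrightarrow> even (int n + j)" by (cases "j \<ge> 0") auto
  finally show ?thesis by simp
qed



lemma div2_at_top: "filterlim (\<lambda>n::nat. (n + j) div 2) at_top sequentially"
  unfolding filterlim_at_top eventually_sequentially
proof (intro allI)
  fix Z show "\<exists>N. \<forall>n\<ge>N. Z \<le> (n + j) div 2" by (intro exI[of _ "2*Z"]) auto
qed

lemma div2m_at_top: "filterlim (\<lambda>n::nat. (n - j) div 2) at_top sequentially"
  unfolding filterlim_at_top eventually_sequentially
proof (intro allI)
  fix Z show "\<exists>N. \<forall>n\<ge>N. Z \<le> (n - j) div 2" by (intro exI[of _ "2*Z+j"]) auto
qed

lemma lim_part: "((\<lambda>n. \<bar>norm_assoc_legendre n (int j) 0\<bar>) \<longlongrightarrow> 1 / pi)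
                        (inf sequentially (principal {n. even (n + j)}))"
proof -
  define h where "h = (\<lambda>n::nat. (2*real n+1) / sqrt((real n+1)^2 - (real j)^2))"
  define s where "s = (\<lambda>n::nat. sqrt (ww ((n+j) div 2) * ww ((n-j) div 2)))"
  define g where "g = (\<lambda>n. sqrt (1/(4*pi) * h n / s n))"
  have h: "h \<longlonglongrightarrow> 2" unfolding h_def by real_asymp
  have s: "s \<longlonglongrightarrow> sqrt (pi/2 * (pi/2))" unfolding s_def
    by (intro tendsto_intros filterlim_compose[OF ww_lim div2_at_top] filterlim_compose[OF ww_lim div2m_at_top])
  have "g \<longlonglongrightarrow> sqrt (1/(4*pi) * 2 / sqrt (pi/2 * (pi/2)))" unfolding g_def
    by (intro tendsto_intros h s) simp
  also have "sqrt (1/(4*pi) * 2 / sqrt (pi/2 * (pi/2))) = 1/pi"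
  proof -
    have "sqrt ((pi/2)^2) = pi/2" using pi_gt_zero by simp
    then have "sqrt (pi/2 * (pi/2)) = pi/2" by (simp only: power2_eq_square)
    moreover have "1/(4*pi) * 2 / (pi/2) = (1/pi)^2" by (simp add: power2_eq_square)
    ultimately have "sqrt (1/(4*pi) * 2 / sqrt (pi/2 * (pi/2))) = sqrt ((1/pi)^2)" by (simp only:)
    also have "\<dots> = 1/pi" using pi_gt_zero by simp
    finally show ?thesis .
  qed
  finally have g: "g \<longlonglongrightarrow> 1/pi" .
  have F: "((\<lambda>n. g n) \<longlongrightarrow> 1/pi) (inf sequentially (principal {n. even (n + j)}))"
    by (rule tendsto_mono[OF _ g]) simp
  show ?thesis
  proof (rule Lim_transform_eventually[OF F])
    show "\<forall>\<^sub>F n in inf sequentially (principal {n. even (n + j)}). g n = \<bar>norm_assoc_legendre n (int j) 0\<bar>"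
      unfolding eventually_inf_principal eventually_sequentially
    proof (intro exI[of _ j] allI impI)
      fix n assume n: "j \<le> n" "n \<in> {n. even (n + j)}"
      have "(norm_assoc_legendre n (int j) 0)^2 = (2*real n+1) / (4*pi * sqrt((real n+1)^2 - (real j)^2) * s n)"
        using N_even[of j "int j" n] n by (simp add: s_def)
      also have "\<dots> = 1/(4*pi) * h n / s n" by (simp add: h_def)
      finally have "\<bar>norm_assoc_legendre n (int j) 0\<bar> = sqrt (1/(4*pi) * h n / s n)"
        by (metis real_sqrt_abs)
      then show "g n = \<bar>norm_assoc_legendre n (int j) 0\<bar>" by (simp add: g_def)
    qed
  qed
qed



lemma part1:
  assumes "- int n \<le> j" "j \<le> int n"
  shows "(odd (int n + j) \<longrightarrow> norm_assoc_legendre n j 0 = 0) \<and>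
            (even (int n + j) \<longrightarrow>
               (2 * real n + 1) / (2 * pi^2 * sqrt ((real n + 1)^2 - (real_of_int j)^2))
                 \<le> \<bar>norm_assoc_legendre n j 0\<bar>^2 \<and>
               \<bar>norm_assoc_legendre n j 0\<bar>^2
                 \<le> (2 * real n + 1) / (4 * pi * sqrt ((real n + 1)^2 - (real_of_int j)^2)))"
proof (intro conjI impI)
  define k where "k = nat \<bar>j\<bar>"
  have kn: "k \<le> n" using assms unfolding k_def by linarith
  {
    assume "odd (int n + j)"
    then show "norm_assoc_legendre n j 0 = 0" using N_odd[OF k_def] parity[of n j] k_def by simp
  }
  assume ev: "even (int n + j)"
  then have ev': "even (n+k)" using parity[of n j] k_def by simp
  define q where "q = sqrt (ww ((n+k) div 2) * ww ((n-k) div 2))"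
  define R where "R = sqrt ((real n + 1)^2 - (real_of_int j)^2)"
  have N: "\<bar>norm_assoc_legendre n j 0\<bar>^2 = (2*real n+1) / (4*pi*R* q)"
    using N_even[OF k_def kn ev'] by (simp add: q_def R_def)
  have "(real_of_int j)^2 \<le> (real n)^2"
  proof -
    have "\<bar>real_of_int j\<bar> \<le> real n" using assms by linarith
    then show ?thesis by (metis abs_ge_zero power2_abs power_mono)
  qed
  then have Rp: "R > 0" unfolding R_def by (simp add: power2_eq_square algebra_simps)
  define x where "x = ww ((n+k) div 2)"
  define y where "y = ww ((n-k) div 2)"
  have x: "1 \<le> x" "x \<le> pi/2" and y: "1 \<le> y" "y \<le> pi/2" unfolding x_def y_def using ww_ge1 ww_le by auto
  have "1*1 \<le> x*y" using x y by (intro mult_mono) auto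
  then have s1: "1 \<le> q" unfolding q_def x_def[symmetric] y_def[symmetric] by simp
  have "x*y \<le> (pi/2)*(pi/2)" using x y by (intro mult_mono) auto
  then have "q \<le> sqrt ((pi/2)^2)" unfolding q_def x_def[symmetric] y_def[symmetric] power2_eq_square
    by (rule real_sqrt_le_mono)
  then have s2: "q \<le> pi/2" using pi_gt_zero by simp
  have c: "0 \<le> 2*real n+1" by simp
  show "\<bar>norm_assoc_legendre n j 0\<bar>^2 \<le> (2 * real n + 1) / (4 * pi * sqrt ((real n + 1)^2 - (real_of_int j)^2))"
    unfolding N R_def[symmetric]
  proof (rule divide_left_mono[OF _ c])
    have "4*pi*R*1 \<le> 4*pi*R* q" using s1 Rp pi_gt_zero by (intro mult_left_mono) auto
    then show "4*pi*R \<le> 4*pi*R* q" by simp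
    show "0 < 4*pi*R* q*(4*pi*R)" using s1 Rp pi_gt_zero by simp
  qed
  show "(2 * real n + 1) / (2 * pi^2 * sqrt ((real n + 1)^2 - (real_of_int j)^2)) \<le> \<bar>norm_assoc_legendre n j 0\<bar>^2"
    unfolding N R_def[symmetric]
  proof (rule divide_left_mono[OF _ c])
    have "4*pi*R* q \<le> 4*pi*R*(pi/2)" using s2 Rp pi_gt_zero by (intro mult_left_mono) auto
    then show "4*pi*R* q \<le> 2*pi^2*R" by (simp add: power2_eq_square)
    show "0 < 2*pi^2*R*(4*pi*R* q)" using s1 Rp pi_gt_zero by simp
  qed
qed

theorem lemma1:
  shows "(\<forall>(n::nat) (j::int). - int n \<le> j \<and> j \<le> int n \<longrightarrow>
            (odd (int n + j) \<longrightarrow> norm_assoc_legendre n j 0 = 0) \<and>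
            (even (int n + j) \<longrightarrow>
               (2 * real n + 1) / (2 * pi^2 * sqrt ((real n + 1)^2 - (real_of_int j)^2))
                 \<le> \<bar>norm_assoc_legendre n j 0\<bar>^2 \<and>
               \<bar>norm_assoc_legendre n j 0\<bar>^2
                 \<le> (2 * real n + 1) / (4 * pi * sqrt ((real n + 1)^2 - (real_of_int j)^2))))
         \<and> (\<forall>j::nat. ((\<lambda>n. \<bar>norm_assoc_legendre n (int j) 0\<bar>) \<longlongrightarrow> 1 / pi)
                        (inf sequentially (principal {n. even (n + j)})))"
  using part1 lim_part by blast


end
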